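(* Let $A\subseteq\mathbb{R}$ be an open invex set with respect to $\eta:A\times A\to\mathbb{R}$ and let $a,b\in A$ with $a<a+\eta(b,a)$. Let $f:A\to\mathbb{R}$ be differentiable with $f'\in L[a,a+\eta(b,a)]$, and suppose $|f'|^q$ is preinvex on $A$ for some fixed $q>1$. Let $p$ satisfy $\frac1p+\frac1q=1$ and let $\alpha\in[0,1]$. Then \[ \left|\frac{f(a)+f(a+\eta(b,a))}{2}-\frac{\Gamma(\alpha+1)}{2\eta^{\alpha}(b,a)}\Big[J_{a^+}^{\alpha}f\big(a+\eta(b,a)\big)+J_{(a+\eta(b,a))^-}^{\alpha}f(a)\Big]\right|\le\frac{\eta(b,a)}{2(\alpha p+1)^{1/p}}\left(\frac{|f'(a)|^q+|f'(b)|^q}{2}\right)^{1/q}. \]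
   Context: A set $A\subseteq\mathbb{R}$ is invex with respect to $\eta:A\times A\to\mathbb{R}$ if $x+t\eta(y,x)\in A$ for all $x,y\in A$ and $t\in[0,1]$. A function $g$ on an invex set $A$ is preinvex with respect to $\eta$ if $g(x+t\eta(y,x))\le(1-t)g(x)+tg(y)$ for all $x,y\in A$, $t\in[0,1]$. For $g\in L[c,d]$ and $\alpha>0$, the Riemann–Liouville fractional integrals are $J_{c^+}^{\alpha}g(x)=\frac{1}{\Gamma(\alpha)}\int_c^x(x-t)^{\alpha-1}g(t)\,dt$ for $x>c$ and $J_{d^-}^{\alpha}g(x)=\frac{1}{\Gamma(\alpha)}\int_x^d(t-x)^{\alpha-1}g(t)\,dt$ for $x<d$, with the convention $J_{c^+}^{0}g=J_{d^-}^{0}g=g$; $\eta^{\alpha}(b,a)=(\eta(b,a))^{\alpha}$. *)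

theory Defs
  imports "HOL-Analysis.Analysis"
begin

definition invex :: "real set \<Rightarrow> (real \<Rightarrow> real \<Rightarrow> real) \<Rightarrow> bool" where
  "invex A \<eta> \<longleftrightarrow> (\<forall>x\<in>A. \<forall>y\<in>A. \<forall>t\<in>{0..1}. x + t * \<eta> y x \<in> A)"

definition preinvex :: "real set \<Rightarrow> (real \<Rightarrow> real \<Rightarrow> real) \<Rightarrow> (real \<Rightarrow> real) \<Rightarrow> bool" where
  "preinvex A \<eta> g \<longleftrightarrow> invex A \<eta> \<and>
     (\<forall>x\<in>A. \<forall>y\<in>A. \<forall>t\<in>{0..1}. g (x + t * \<eta> y x) \<le> (1 - t) * g x + t * g y)"

definition RL_left :: "real \<Rightarrow> real \<Rightarrow> (real \<Rightarrow> real) \<Rightarrow> real \<Rightarrow> real" where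
  "RL_left \<alpha> c g x = (if \<alpha> = 0 then g x
     else (1 / Gamma \<alpha>) * (LINT t:{c..x}|lborel. (x - t) powr (\<alpha> - 1) * g t))"

definition RL_right :: "real \<Rightarrow> real \<Rightarrow> (real \<Rightarrow> real) \<Rightarrow> real \<Rightarrow> real" where
  "RL_right \<alpha> d g x = (if \<alpha> = 0 then g x
     else (1 / Gamma \<alpha>) * (LINT t:{x..d}|lborel. (t - x) powr (\<alpha> - 1) * g t))"

end

theory Submission
  imports Defs
begin


lemma ftc_real:
  fixes F F' :: "real \<Rightarrow> real"
  assumes "a \<le> b" "continuous_on {a..b} F"
    "\<And>x. a < x \<Longrightarrow> x < b \<Longrightarrow> (F has_real_derivative F' x) (at x)"
  shows "(F' has_integral (F b - F a)) {a..b}"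
  using fundamental_theorem_of_calculus_interior[OF assms(1,2)] assms(3)
  by (auto simp: has_real_derivative_iff_has_vector_derivative)

lemma powr_add_le:
  fixes x y \<alpha> :: real
  assumes "0 \<le> x" "0 \<le> y" "0 < \<alpha>" "\<alpha> \<le> 1"
  shows "(x + y) powr \<alpha> \<le> x powr \<alpha> + y powr \<alpha>"
proof (cases "x + y = 0")
  case True
  then show ?thesis using assms by auto
next
  case False
  define s where "s = x + y"
  have s: "s > 0" using False assms s_def by auto
  have 1: "x / s \<le> (x / s) powr \<alpha>"
    using powr_mono'[of \<alpha> 1 "x/s"] assms s s_def by (simp add: field_simps)
  have 2: "y / s \<le> (y / s) powr \<alpha>"
    using powr_mono'[of \<alpha> 1 "y/s"] assms s s_def by (simp add: field_simps)
  have "x / s + y / s = (x + y) / s" by (simp add: add_divide_distrib)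
  then have "1 = x / s + y / s" using s s_def by simp
  also have "\<dots> \<le> (x powr \<alpha> + y powr \<alpha>) / s powr \<alpha>"
    using 1 2 assms s by (simp add: powr_divide add_divide_distrib)
  finally have "s powr \<alpha> \<le> x powr \<alpha> + y powr \<alpha>"
    using s by (simp add: field_simps)
  then show ?thesis using s_def by simp
qed

lemma powr_diff_le:
  fixes u v \<alpha> :: real
  assumes "0 \<le> u" "0 \<le> v" "0 < \<alpha>" "\<alpha> \<le> 1"
  shows "\<bar>u powr \<alpha> - v powr \<alpha>\<bar> \<le> \<bar>u - v\<bar> powr \<alpha>"
proof -
  have *: "\<bar>u powr \<alpha> - v powr \<alpha>\<bar> \<le> \<bar>u - v\<bar> powr \<alpha>" if "0 \<le> v" "v \<le> u" "0 < \<alpha>" "\<alpha> \<le> 1" for u v :: real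
  proof -
    have "u powr \<alpha> \<le> (u - v) powr \<alpha> + v powr \<alpha>"
      using powr_add_le[of "u - v" v \<alpha>] that by simp
    moreover have "v powr \<alpha> \<le> u powr \<alpha>" using that powr_mono2 by auto
    ultimately show ?thesis using that by auto
  qed
  show ?thesis
  proof (cases "v \<le> u")
    case True then show ?thesis using * assms by blast
  next
    case False then show ?thesis using *[of u v] assms by (simp add: abs_minus_commute)
  qed
qed

lemma holder_bound:
  fixes u v h L :: "real \<Rightarrow> real" and p q U V :: real
  assumes pq: "p > 1" "q > 1" "1/p + 1/q = 1" and UV: "U > 0" "V > 0"
    and pos: "\<And>x. x \<in> S \<Longrightarrow> 0 \<le> u x" "\<And>x. x \<in> S \<Longrightarrow> 0 \<le> v x"
    and hb: "\<And>x. x \<in> S \<Longrightarrow> u x powr p \<le> h x"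
    and Lb: "\<And>x. x \<in> S \<Longrightarrow> v x powr q \<le> L x"
    and int: "(\<lambda>x. u x * v x) integrable_on S" "h integrable_on S" "L integrable_on S"
    and ih: "integral S h \<le> U" and iL: "integral S L \<le> V"
  shows "integral S (\<lambda>x. u x * v x) \<le> U powr (1/p) * V powr (1/q)"
proof -
  define K where "K = U powr (1/p) * V powr (1/q)"
  have K: "K > 0" using UV K_def by simp
  have pw: "\<And>x. x \<in> S \<Longrightarrow> u x * v x \<le> K * (h x / (p * U) + L x / (q * V))"
  proof -
    fix x assume x: "x \<in> S"
    have a0: "0 \<le> u x / U powr (1/p)" "0 \<le> v x / V powr (1/q)" using pos x by auto
    have "(u x / U powr (1/p)) * (v x / V powr (1/q))
        \<le> (u x / U powr (1/p)) powr p / p + (v x / V powr (1/q)) powr q / q"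
      by (rule Youngs_inequality[OF pq a0])
    also have "(u x / U powr (1/p)) powr p = u x powr p / U"
      using pos x UV pq by (simp add: powr_divide powr_powr)
    also have "(v x / V powr (1/q)) powr q = v x powr q / V"
      using pos x UV pq by (simp add: powr_divide powr_powr)
    also have "u x powr p / U / p + v x powr q / V / q \<le> h x / (p * U) + L x / (q * V)"
    proof -
      have "u x powr p / U / p \<le> h x / (p * U)"
        using hb[OF x] UV pq by (simp add: field_simps divide_right_mono)
      moreover have "v x powr q / V / q \<le> L x / (q * V)"
        using Lb[OF x] UV pq by (simp add: field_simps divide_right_mono)
      ultimately show ?thesis by linarith
    qed
    finally have "u x / U powr (1/p) * (v x / V powr (1/q)) \<le> h x / (p * U) + L x / (q * V)" .
    then have "K * (u x / U powr (1/p) * (v x / V powr (1/q))) \<le> K * (h x / (p * U) + L x / (q * V))"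
      using K by (intro mult_left_mono) auto
    moreover have "K * (u x / U powr (1/p) * (v x / V powr (1/q))) = u x * v x"
      using UV unfolding K_def by (simp add: field_simps)
    ultimately show "u x * v x \<le> K * (h x / (p * U) + L x / (q * V))" by simp
  qed
  have i1: "(\<lambda>x. h x / (p * U) + L x / (q * V)) integrable_on S"
    using int by (intro integrable_add integrable_on_divide) auto
  have int2: "(\<lambda>x. K * (h x / (p * U) + L x / (q * V))) integrable_on S"
    using integrable_on_cmult_left[OF i1, where c=K] by simp
  have "integral S (\<lambda>x. u x * v x) \<le> integral S (\<lambda>x. K * (h x / (p * U) + L x / (q * V)))"
    by (rule integral_le[OF int(1) int2 pw])
  also have "\<dots> = K * (integral S h / (p * U) + integral S L / (q * V))"
    using int by (simp add: integral_add integrable_on_divide)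
  also have "\<dots> \<le> K * (1 / p + 1 / q)"
  proof -
    have "integral S h / (p * U) \<le> 1 / p" using ih UV pq by (simp add: field_simps)
    moreover have "integral S L / (q * V) \<le> 1 / q" using iL UV pq by (simp add: field_simps)
    ultimately show ?thesis using K by (simp add: mult_left_mono)
  qed
  finally show ?thesis using pq K_def by simp
qed


lemma deriv_powr_left:
  fixes c x \<alpha> :: real
  assumes "x < c"
  shows "((\<lambda>x. (c - x) powr \<alpha>) has_real_derivative (- (\<alpha> * (c - x) powr (\<alpha> - 1)))) (at x)"
proof -
  have "((\<lambda>x. (c - x) powr \<alpha>) has_real_derivative (\<alpha> * (c - x) powr (\<alpha> - 1)) * (-1)) (at x)"
    by (rule DERIV_chain2[OF has_real_derivative_powr]) (use assms in \<open>auto intro!: derivative_eq_intros\<close>)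
  then show ?thesis by simp
qed

lemma deriv_powr_right:
  fixes a x \<alpha> :: real
  assumes "a < x"
  shows "((\<lambda>x. (x - a) powr \<alpha>) has_real_derivative (\<alpha> * (x - a) powr (\<alpha> - 1))) (at x)"
proof -
  have "((\<lambda>x. (x - a) powr \<alpha>) has_real_derivative (\<alpha> * (x - a) powr (\<alpha> - 1)) * 1) (at x)"
    by (rule DERIV_chain2[OF has_real_derivative_powr]) (use assms in \<open>auto intro!: derivative_eq_intros\<close>)
  then show ?thesis by simp
qed

lemma powr_weight_integral_left:
  fixes a c \<alpha> :: real
  assumes "0 < \<alpha>" "a < c"
  shows "((\<lambda>x. (c - x) powr (\<alpha> - 1)) has_integral (c - a) powr \<alpha> / \<alpha>) {a..c}"
proof -
  have "((\<lambda>x. (c - x) powr (\<alpha> - 1)) has_integral ((\<lambda>x. - ((c - x) powr \<alpha> / \<alpha>)) c - (\<lambda>x. - ((c - x) powr \<alpha> / \<alpha>)) a)) {a..c}"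
  proof (rule ftc_real)
    show "continuous_on {a..c} (\<lambda>x. - ((c - x) powr \<alpha> / \<alpha>))"
      using assms by (intro continuous_intros continuous_on_powr') auto
    fix x assume "a < x" "x < c"
    show "((\<lambda>x. - ((c - x) powr \<alpha> / \<alpha>)) has_real_derivative (c - x) powr (\<alpha> - 1)) (at x)"
      using DERIV_divide[OF deriv_powr_left[OF \<open>x < c\<close>, of \<alpha>] DERIV_const[of \<alpha>]] assms \<open>x < c\<close> \<open>a < x\<close>
      by (auto intro!: derivative_eq_intros DERIV_cong[OF DERIV_minus] simp: field_simps)
  qed (use assms in auto)
  then show ?thesis by simp
qed

lemma powr_weight_integral_right:
  fixes a c \<alpha> :: real
  assumes "0 < \<alpha>" "a < c"
  shows "((\<lambda>x. (x - a) powr (\<alpha> - 1)) has_integral (c - a) powr \<alpha> / \<alpha>) {a..c}"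
proof -
  have "((\<lambda>x. (x - a) powr (\<alpha> - 1)) has_integral ((\<lambda>x. (x - a) powr \<alpha> / \<alpha>) c - (\<lambda>x. (x - a) powr \<alpha> / \<alpha>) a)) {a..c}"
  proof (rule ftc_real)
    show "continuous_on {a..c} (\<lambda>x. (x - a) powr \<alpha> / \<alpha>)"
      using assms by (intro continuous_intros continuous_on_powr') auto
    fix x assume "a < x" "x < c"
    show "((\<lambda>x. (x - a) powr \<alpha> / \<alpha>) has_real_derivative (x - a) powr (\<alpha> - 1)) (at x)"
      using DERIV_divide[OF deriv_powr_right[OF \<open>a < x\<close>, of \<alpha>] DERIV_const[of \<alpha>]] assms \<open>x < c\<close> \<open>a < x\<close>
      by (auto simp: field_simps)
  qed (use assms in auto)
  then show ?thesis by simp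
qed


lemma ibp_left:
  fixes f f' :: "real \<Rightarrow> real" and a c \<alpha> :: real
  assumes \<alpha>: "0 < \<alpha>" and ac: "a < c" and cf: "continuous_on {a..c} f"
    and df: "\<And>x. a < x \<Longrightarrow> x < c \<Longrightarrow> (f has_real_derivative f' x) (at x)"
    and if': "f' absolutely_integrable_on {a..c}"
  shows "(\<lambda>x. (c - x) powr (\<alpha> - 1) * f x) absolutely_integrable_on {a..c}"
    "\<alpha> * integral {a..c} (\<lambda>x. (c - x) powr (\<alpha> - 1) * f x)
       = (c - a) powr \<alpha> * f a + integral {a..c} (\<lambda>x. (c - x) powr \<alpha> * f' x)"
    "(\<lambda>x. (c - x) powr \<alpha> * f' x) absolutely_integrable_on {a..c}"
proof -
  have cw: "continuous_on {a..c} (\<lambda>x. (c - x) powr \<alpha>)"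
    using \<alpha> by (intro continuous_intros continuous_on_powr') auto
  show I2: "(\<lambda>x. (c - x) powr \<alpha> * f' x) absolutely_integrable_on {a..c}"
  proof (rule absolutely_integrable_bounded_measurable_product_real[OF _ _ _ if'])
    show "(\<lambda>x. (c - x) powr \<alpha>) \<in> borel_measurable (lebesgue_on {a..c})"
      by (rule continuous_imp_measurable_on_sets_lebesgue[OF cw]) simp
    show "bounded ((\<lambda>x. (c - x) powr \<alpha>) ` {a..c})"
      by (rule compact_imp_bounded[OF compact_continuous_image[OF cw compact_Icc]])
  qed simp
  define H where "H = (\<lambda>x. - (\<alpha> * (c - x) powr (\<alpha> - 1)) * f x + (c - x) powr \<alpha> * f' x)"
  have FH: "(H has_integral ((\<lambda>x. (c - x) powr \<alpha> * f x) c - (\<lambda>x. (c - x) powr \<alpha> * f x) a)) {a..c}"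
    unfolding H_def
  proof (rule ftc_real)
    show "continuous_on {a..c} (\<lambda>x. (c - x) powr \<alpha> * f x)"
      by (intro continuous_on_mult cw cf)
    fix x assume x: "a < x" "x < c"
    show "((\<lambda>x. (c - x) powr \<alpha> * f x) has_real_derivative
           - (\<alpha> * (c - x) powr (\<alpha> - 1)) * f x + (c - x) powr \<alpha> * f' x) (at x)"
      by (rule DERIV_cong[OF DERIV_mult[OF deriv_powr_left[OF x(2)] df[OF x]]]) simp
  qed (use ac in auto)
  then have FH': "(H has_integral (- ((c - a) powr \<alpha> * f a))) {a..c}" using \<alpha> by simp
  have I2i: "((\<lambda>x. (c - x) powr \<alpha> * f' x) has_integral integral {a..c} (\<lambda>x. (c - x) powr \<alpha> * f' x)) {a..c}"
    using I2 set_lebesgue_integral_eq_integral(1) by blast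
  have "((\<lambda>x. (c - x) powr \<alpha> * f' x - H x) has_integral
        (integral {a..c} (\<lambda>x. (c - x) powr \<alpha> * f' x) + (c - a) powr \<alpha> * f a)) {a..c}"
    using has_integral_diff[OF I2i FH'] by simp
  then have "((\<lambda>x. (1 / \<alpha>) *\<^sub>R ((c - x) powr \<alpha> * f' x - H x)) has_integral
        (1 / \<alpha>) *\<^sub>R (integral {a..c} (\<lambda>x. (c - x) powr \<alpha> * f' x) + (c - a) powr \<alpha> * f a)) {a..c}"
    by (rule has_integral_cmul)
  moreover have "(\<lambda>x. (1 / \<alpha>) *\<^sub>R ((c - x) powr \<alpha> * f' x - H x)) = (\<lambda>x. (c - x) powr (\<alpha> - 1) * f x)"
    using \<alpha> unfolding H_def by (auto simp: field_simps)
  ultimately have W: "((\<lambda>x. (c - x) powr (\<alpha> - 1) * f x) has_integral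
        (integral {a..c} (\<lambda>x. (c - x) powr \<alpha> * f' x) + (c - a) powr \<alpha> * f a) / \<alpha>) {a..c}"
    by simp
  then show "\<alpha> * integral {a..c} (\<lambda>x. (c - x) powr (\<alpha> - 1) * f x)
       = (c - a) powr \<alpha> * f a + integral {a..c} (\<lambda>x. (c - x) powr \<alpha> * f' x)"
    using \<alpha> integral_unique[OF W] by simp
  obtain M where M: "\<And>x. x \<in> {a..c} \<Longrightarrow> \<bar>f x\<bar> \<le> M"
    using compact_imp_bounded[OF compact_continuous_image[OF cf compact_Icc]]
    unfolding bounded_iff by (metis image_eqI real_norm_def)
  show "(\<lambda>x. (c - x) powr (\<alpha> - 1) * f x) absolutely_integrable_on {a..c}"
  proof (rule absolutely_integrable_integrable_bound)
    show "(\<lambda>x. (c - x) powr (\<alpha> - 1) * f x) integrable_on {a..c}" using W by blast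
    show "(\<lambda>x. M * (c - x) powr (\<alpha> - 1)) integrable_on {a..c}"
      using powr_weight_integral_left[OF \<alpha> ac] integrable_on_cmult_left[where c=M] by force
    fix x assume "x \<in> {a..c}"
    then show "norm ((c - x) powr (\<alpha> - 1) * f x) \<le> M * (c - x) powr (\<alpha> - 1)"
      using M by (auto simp: abs_mult mult.commute intro!: mult_right_mono)
  qed
qed

lemma ibp_right:
  fixes f f' :: "real \<Rightarrow> real" and a c \<alpha> :: real
  assumes \<alpha>: "0 < \<alpha>" and ac: "a < c" and cf: "continuous_on {a..c} f"
    and df: "\<And>x. a < x \<Longrightarrow> x < c \<Longrightarrow> (f has_real_derivative f' x) (at x)"
    and if': "f' absolutely_integrable_on {a..c}"
  shows "(\<lambda>x. (x - a) powr (\<alpha> - 1) * f x) absolutely_integrable_on {a..c}"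
    "\<alpha> * integral {a..c} (\<lambda>x. (x - a) powr (\<alpha> - 1) * f x)
       = (c - a) powr \<alpha> * f c - integral {a..c} (\<lambda>x. (x - a) powr \<alpha> * f' x)"
    "(\<lambda>x. (x - a) powr \<alpha> * f' x) absolutely_integrable_on {a..c}"
proof -
  have cw: "continuous_on {a..c} (\<lambda>x. (x - a) powr \<alpha>)"
    using \<alpha> by (intro continuous_intros continuous_on_powr') auto
  show I2: "(\<lambda>x. (x - a) powr \<alpha> * f' x) absolutely_integrable_on {a..c}"
  proof (rule absolutely_integrable_bounded_measurable_product_real[OF _ _ _ if'])
    show "(\<lambda>x. (x - a) powr \<alpha>) \<in> borel_measurable (lebesgue_on {a..c})"
      by (rule continuous_imp_measurable_on_sets_lebesgue[OF cw]) simp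
    show "bounded ((\<lambda>x. (x - a) powr \<alpha>) ` {a..c})"
      by (rule compact_imp_bounded[OF compact_continuous_image[OF cw compact_Icc]])
  qed simp
  define H where "H = (\<lambda>x. (\<alpha> * (x - a) powr (\<alpha> - 1)) * f x + (x - a) powr \<alpha> * f' x)"
  have FH: "(H has_integral ((\<lambda>x. (x - a) powr \<alpha> * f x) c - (\<lambda>x. (x - a) powr \<alpha> * f x) a)) {a..c}"
    unfolding H_def
  proof (rule ftc_real)
    show "continuous_on {a..c} (\<lambda>x. (x - a) powr \<alpha> * f x)"
      by (intro continuous_on_mult cw cf)
    fix x assume x: "a < x" "x < c"
    show "((\<lambda>x. (x - a) powr \<alpha> * f x) has_real_derivative
           (\<alpha> * (x - a) powr (\<alpha> - 1)) * f x + (x - a) powr \<alpha> * f' x) (at x)"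
      by (rule DERIV_cong[OF DERIV_mult[OF deriv_powr_right[OF x(1)] df[OF x]]]) simp
  qed (use ac in auto)
  then have FH': "(H has_integral ((c - a) powr \<alpha> * f c)) {a..c}" using \<alpha> by simp
  have I2i: "((\<lambda>x. (x - a) powr \<alpha> * f' x) has_integral integral {a..c} (\<lambda>x. (x - a) powr \<alpha> * f' x)) {a..c}"
    using I2 set_lebesgue_integral_eq_integral(1) by blast
  have "((\<lambda>x. H x - (x - a) powr \<alpha> * f' x) has_integral
        ((c - a) powr \<alpha> * f c - integral {a..c} (\<lambda>x. (x - a) powr \<alpha> * f' x))) {a..c}"
    using has_integral_diff[OF FH' I2i] by simp
  then have "((\<lambda>x. (1 / \<alpha>) *\<^sub>R (H x - (x - a) powr \<alpha> * f' x)) has_integral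
        (1 / \<alpha>) *\<^sub>R ((c - a) powr \<alpha> * f c - integral {a..c} (\<lambda>x. (x - a) powr \<alpha> * f' x))) {a..c}"
    by (rule has_integral_cmul)
  moreover have "(\<lambda>x. (1 / \<alpha>) *\<^sub>R (H x - (x - a) powr \<alpha> * f' x)) = (\<lambda>x. (x - a) powr (\<alpha> - 1) * f x)"
    using \<alpha> unfolding H_def by (auto simp: field_simps)
  ultimately have W: "((\<lambda>x. (x - a) powr (\<alpha> - 1) * f x) has_integral
        ((c - a) powr \<alpha> * f c - integral {a..c} (\<lambda>x. (x - a) powr \<alpha> * f' x)) / \<alpha>) {a..c}"
    by simp
  then show "\<alpha> * integral {a..c} (\<lambda>x. (x - a) powr (\<alpha> - 1) * f x)
       = (c - a) powr \<alpha> * f c - integral {a..c} (\<lambda>x. (x - a) powr \<alpha> * f' x)"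
    using \<alpha> integral_unique[OF W] by simp
  obtain M where M: "\<And>x. x \<in> {a..c} \<Longrightarrow> \<bar>f x\<bar> \<le> M"
    using compact_imp_bounded[OF compact_continuous_image[OF cf compact_Icc]]
    unfolding bounded_iff by (metis image_eqI real_norm_def)
  show "(\<lambda>x. (x - a) powr (\<alpha> - 1) * f x) absolutely_integrable_on {a..c}"
  proof (rule absolutely_integrable_integrable_bound)
    show "(\<lambda>x. (x - a) powr (\<alpha> - 1) * f x) integrable_on {a..c}" using W by blast
    show "(\<lambda>x. M * (x - a) powr (\<alpha> - 1)) integrable_on {a..c}"
      using powr_weight_integral_right[OF \<alpha> ac] integrable_on_cmult_left[where c=M] by force
    fix x assume "x \<in> {a..c}"
    then show "norm ((x - a) powr (\<alpha> - 1) * f x) \<le> M * (x - a) powr (\<alpha> - 1)"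
      using M by (auto simp: abs_mult mult.commute intro!: mult_right_mono)
  qed
qed


lemma abs_powr_integral:
  fixes a c \<beta> :: real
  assumes \<beta>: "0 < \<beta>" and ac: "a < c"
  shows "((\<lambda>x. \<bar>a + c - 2 * x\<bar> powr \<beta>) has_integral (c - a) powr (\<beta> + 1) / (\<beta> + 1)) {a..c}"
proof -
  define m where "m = (a + c) / 2"
  have am: "a \<le> m" "m \<le> c" using ac m_def by auto
  have I1: "((\<lambda>x. \<bar>a + c - 2 * x\<bar> powr \<beta>) has_integral
      ((\<lambda>x. - ((a + c - 2 * x) powr (\<beta> + 1) / (2 * (\<beta> + 1)))) m
       - (\<lambda>x. - ((a + c - 2 * x) powr (\<beta> + 1) / (2 * (\<beta> + 1)))) a)) {a..m}"
  proof (rule ftc_real[OF am(1)])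
    show "continuous_on {a..m} (\<lambda>x. - ((a + c - 2 * x) powr (\<beta> + 1) / (2 * (\<beta> + 1))))"
      using \<beta> m_def by (intro continuous_intros continuous_on_powr') auto
    fix x assume x: "a < x" "x < m"
    then have pos: "a + c - 2 * x > 0" using m_def by auto
    have "((\<lambda>x. (a + c - 2 * x) powr (\<beta> + 1)) has_real_derivative
           ((\<beta> + 1) * (a + c - 2 * x) powr (\<beta> + 1 - 1)) * (- 2)) (at x)"
      by (rule DERIV_chain2[where f="\<lambda>z. z powr (\<beta> + 1)" and g="\<lambda>x. a + c - 2 * x", OF has_real_derivative_powr[OF pos]]) (auto intro!: derivative_eq_intros)
    then have "((\<lambda>x. - ((a + c - 2 * x) powr (\<beta> + 1) / (2 * (\<beta> + 1)))) has_real_derivative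
           - (((\<beta> + 1) * (a + c - 2 * x) powr (\<beta> + 1 - 1)) * (- 2) / (2 * (\<beta> + 1)))) (at x)"
      by (intro DERIV_minus DERIV_cdivide)
    then show "((\<lambda>x. - ((a + c - 2 * x) powr (\<beta> + 1) / (2 * (\<beta> + 1)))) has_real_derivative
           \<bar>a + c - 2 * x\<bar> powr \<beta>) (at x)"
      by (rule DERIV_cong) (use pos \<beta> in \<open>simp add: field_simps\<close>)
  qed
  have I2: "((\<lambda>x. \<bar>a + c - 2 * x\<bar> powr \<beta>) has_integral
      ((\<lambda>x. (2 * x - a - c) powr (\<beta> + 1) / (2 * (\<beta> + 1))) c
       - (\<lambda>x. (2 * x - a - c) powr (\<beta> + 1) / (2 * (\<beta> + 1))) m)) {m..c}"
  proof (rule ftc_real[OF am(2)])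
    show "continuous_on {m..c} (\<lambda>x. (2 * x - a - c) powr (\<beta> + 1) / (2 * (\<beta> + 1)))"
      using \<beta> m_def by (intro continuous_intros continuous_on_powr') auto
    fix x assume x: "m < x" "x < c"
    then have pos: "2 * x - a - c > 0" using m_def by auto
    have "((\<lambda>x. (2 * x - a - c) powr (\<beta> + 1)) has_real_derivative
           ((\<beta> + 1) * (2 * x - a - c) powr (\<beta> + 1 - 1)) * 2) (at x)"
      by (rule DERIV_chain2[where f="\<lambda>z. z powr (\<beta> + 1)" and g="\<lambda>x. 2 * x - a - c", OF has_real_derivative_powr[OF pos]]) (auto intro!: derivative_eq_intros)
    then have "((\<lambda>x. (2 * x - a - c) powr (\<beta> + 1) / (2 * (\<beta> + 1))) has_real_derivative
           (((\<beta> + 1) * (2 * x - a - c) powr (\<beta> + 1 - 1)) * 2 / (2 * (\<beta> + 1)))) (at x)"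
      by (intro DERIV_cdivide)
    moreover have "\<bar>a + c - 2 * x\<bar> = 2 * x - a - c" using pos by simp
    ultimately show "((\<lambda>x. (2 * x - a - c) powr (\<beta> + 1) / (2 * (\<beta> + 1))) has_real_derivative
           \<bar>a + c - 2 * x\<bar> powr \<beta>) (at x)"
      using \<beta> by (auto elim!: DERIV_cong simp: field_simps)
  qed
  have e1: "a + c - 2 * a = c - a" "2 * c - a - c = c - a" "a + c - 2 * m = 0" "2 * m - a - c = 0"
    using m_def by auto
  have "((\<lambda>x. \<bar>a + c - 2 * x\<bar> powr \<beta>) has_integral
      ((c - a) powr (\<beta> + 1) / (2 * (\<beta> + 1)) + (c - a) powr (\<beta> + 1) / (2 * (\<beta> + 1)))) {a..c}"
    using has_integral_combine[OF am I1 I2] e1 \<beta> by simp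
  moreover have "(c - a) powr (\<beta> + 1) / (2 * (\<beta> + 1)) + (c - a) powr (\<beta> + 1) / (2 * (\<beta> + 1))
     = (c - a) powr (\<beta> + 1) / (\<beta> + 1)"
    by (metis field_sum_of_halves divide_divide_eq_left mult.commute)
  ultimately show ?thesis by (simp only:)
qed

lemma linear_integral:
  fixes a c A B :: real
  assumes ac: "a < c"
  shows "((\<lambda>x. (1 - (x - a) / (c - a)) * A + (x - a) / (c - a) * B) has_integral (c - a) * ((A + B) / 2)) {a..c}"
proof -
  have "((\<lambda>x. (1 - (x - a) / (c - a)) * A + (x - a) / (c - a) * B) has_integral
      ((\<lambda>x. ((x - a)^2 * B - (c - x)^2 * A) / (2 * (c - a))) c
      - (\<lambda>x. ((x - a)^2 * B - (c - x)^2 * A) / (2 * (c - a))) a)) {a..c}"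
  proof (rule ftc_real)
    show "continuous_on {a..c} (\<lambda>x. ((x - a)^2 * B - (c - x)^2 * A) / (2 * (c - a)))"
      using ac by (intro continuous_intros) auto
    fix x assume x: "a < x" "x < c"
    show "((\<lambda>x. ((x - a)^2 * B - (c - x)^2 * A) / (2 * (c - a))) has_real_derivative
       (1 - (x - a) / (c - a)) * A + (x - a) / (c - a) * B) (at x)"
      using ac by (auto intro!: derivative_eq_intros simp: divide_simps power2_eq_square) (simp add: algebra_simps)
  qed (use ac in auto)
  moreover have "(\<lambda>x. ((x - a)^2 * B - (c - x)^2 * A) / (2 * (c - a))) c
      - (\<lambda>x. ((x - a)^2 * B - (c - x)^2 * A) / (2 * (c - a))) a = (c - a) * ((A + B) / 2)"
  proof -
    define e where "e = c - a"
    have e: "e > 0" "c = a + e" using ac e_def by auto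
    show ?thesis using e by (simp add: power2_eq_square field_simps)
  qed
  ultimately show ?thesis by (simp only:)
qed


lemma lborel_of_abs_int:
  fixes f k :: "real \<Rightarrow> real"
  assumes g: "(\<lambda>x. k x * f x) absolutely_integrable_on {a..c}"
    and cf: "continuous_on {a..c} f" and k: "k \<in> borel_measurable borel"
  shows "set_integrable lborel {a..c} (\<lambda>x. k x * f x)"
proof -
  have m1: "(\<lambda>x. indicator {a..c} x *\<^sub>R f x) \<in> borel_measurable borel"
    by (rule borel_measurable_continuous_on_indicator[OF _ cf]) simp
  have "(\<lambda>x. k x * (indicator {a..c} x *\<^sub>R f x)) \<in> borel_measurable borel"
    using m1 k by (intro borel_measurable_times) auto
  moreover have "(\<lambda>x. indicator {a..c} x *\<^sub>R (k x * f x)) = (\<lambda>x. k x * (indicator {a..c} x *\<^sub>R f x))"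
    by (auto simp: indicator_def)
  ultimately have m: "(\<lambda>x. indicator {a..c} x *\<^sub>R (k x * f x)) \<in> borel_measurable lborel"
    by simp
  show ?thesis
    using g integrable_completion[OF m] unfolding set_integrable_def by simp
qed



theorem theorem2p4:
  fixes A :: "real set" and \<eta> :: "real \<Rightarrow> real \<Rightarrow> real"
    and f f' :: "real \<Rightarrow> real" and a b p q \<alpha> :: real
  assumes "open A" and "invex A \<eta>"
    and "a \<in> A" and "b \<in> A" and "a < a + \<eta> b a"
    and "\<And>x. x \<in> A \<Longrightarrow> (f has_real_derivative f' x) (at x)"
    and "set_integrable lborel {a..a + \<eta> b a} f'"
    and "q > 1" and "1 / p + 1 / q = 1"
    and "preinvex A \<eta> (\<lambda>x. \<bar>f' x\<bar> powr q)"
    and "0 \<le> \<alpha>" and "\<alpha> \<le> 1"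
  shows "\<bar>(f a + f (a + \<eta> b a)) / 2
           - Gamma (\<alpha> + 1) / (2 * (\<eta> b a) powr \<alpha>)
             * (RL_left \<alpha> a f (a + \<eta> b a) + RL_right \<alpha> (a + \<eta> b a) f a)\<bar>
         \<le> \<eta> b a / (2 * (\<alpha> * p + 1) powr (1 / p))
             * ((\<bar>f' a\<bar> powr q + \<bar>f' b\<bar> powr q) / 2) powr (1 / q)"
proof -
  note inv = assms(2) and der = assms(6) and intf = assms(7) and pq = assms(8,9)
    and pre = assms(10) and al = assms(11,12)
  define e where "e = \<eta> b a"
  define c where "c = a + e"
  define Aq where "Aq = \<bar>f' a\<bar> powr q"
  define Bq where "Bq = \<bar>f' b\<bar> powr q"
  have e0: "e > 0" and ac: "a < c" using assms(5) e_def c_def by auto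
  have p1: "p > 1"
  proof -
    have "1 / q < 1" "0 < 1 / q" using pq by auto
    then have "0 < 1 / p" "1 / p < 1" using pq by linarith+
    then show ?thesis by (auto simp: divide_less_eq zero_less_divide_iff)
  qed
  have tx: "a + ((x - a) / e) * \<eta> b a = x" for x using e0 e_def by simp
  have sub: "x \<in> A" if "x \<in> {a..c}" for x
  proof -
    have "(x - a) / e \<in> {0..1}" using that e0 c_def by (auto simp: divide_le_eq)
    then have "a + ((x - a) / e) * \<eta> b a \<in> A"
      using inv assms(3,4) unfolding invex_def by blast
    then show ?thesis using tx by simp
  qed
  have df: "(f has_real_derivative f' x) (at x)" if "x \<in> {a..c}" for x
    using der sub that by blast
  have df': "(f has_real_derivative f' x) (at x)" if "a < x" "x < c" for x
    using df that by auto
  have cf: "continuous_on {a..c} f"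
    by (rule continuous_at_imp_continuous_on) (use df DERIV_isCont in blast)
  have if': "f' absolutely_integrable_on {a..c}"
  proof -
    have i: "integrable lborel (\<lambda>x. indicator {a..c} x *\<^sub>R f' x)"
      using intf unfolding set_integrable_def c_def e_def by simp
    show ?thesis
      using integrable_completion[OF borel_measurable_integrable[OF i]] i
      unfolding set_integrable_def by simp
  qed
  have Lb: "\<bar>f' x\<bar> powr q \<le> (1 - (x - a) / e) * Aq + (x - a) / e * Bq" if "x \<in> {a..c}" for x
  proof -
    have "(x - a) / e \<in> {0..1}" using that e0 c_def by (auto simp: divide_le_eq)
    then have "\<bar>f' (a + ((x - a) / e) * \<eta> b a)\<bar> powr q \<le> (1 - (x - a) / e) * Aq + (x - a) / e * Bq"
      using pre assms(3,4) unfolding preinvex_def Aq_def Bq_def by blast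
    then show ?thesis using tx by simp
  qed
  have RHS0: "0 \<le> e / (2 * (\<alpha> * p + 1) powr (1 / p)) * ((Aq + Bq) / 2) powr (1 / q)"
    using e0 by simp
  have main: "\<bar>(f a + f c) / 2 - Gamma (\<alpha> + 1) / (2 * e powr \<alpha>) * (RL_left \<alpha> a f c + RL_right \<alpha> c f a)\<bar>
     \<le> e / (2 * (\<alpha> * p + 1) powr (1 / p)) * ((Aq + Bq) / 2) powr (1 / q)"
  proof (cases "\<alpha> = 0")
    case True
    have "0 \<le> e * ((Aq + Bq) / 2) powr (1 / q)" using e0 by simp
    then show ?thesis using e0 True by (simp add: RL_left_def RL_right_def algebra_simps)
  next
    case False
    then have a0: "0 < \<alpha>" using al by simp
    note L = ibp_left[OF a0 ac cf df' if'] and R = ibp_right[OF a0 ac cf df' if']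
    define Il where "Il = integral {a..c} (\<lambda>x. (c - x) powr (\<alpha> - 1) * f x)"
    define Ir where "Ir = integral {a..c} (\<lambda>x. (x - a) powr (\<alpha> - 1) * f x)"
    define w where "w = (\<lambda>x. (c - x) powr \<alpha> - (x - a) powr \<alpha>)"
    define J where "J = integral {a..c} (\<lambda>x. w x * f' x)"
    have RLl: "RL_left \<alpha> a f c = (1 / Gamma \<alpha>) * Il"
    proof -
      have "set_integrable lborel {a..c} (\<lambda>x. (c - x) powr (\<alpha> - 1) * f x)"
        by (rule lborel_of_abs_int[OF L(1) cf]) measurable
      then show ?thesis using a0 unfolding RL_left_def Il_def
        by (simp add: set_borel_integral_eq_integral(2))
    qed
    have RLr: "RL_right \<alpha> c f a = (1 / Gamma \<alpha>) * Ir"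
    proof -
      have "set_integrable lborel {a..c} (\<lambda>x. (x - a) powr (\<alpha> - 1) * f x)"
        by (rule lborel_of_abs_int[OF R(1) cf]) measurable
      then show ?thesis using a0 unfolding RL_right_def Ir_def
        by (simp add: set_borel_integral_eq_integral(2))
    qed
    have wf: "(\<lambda>x. w x * f' x) absolutely_integrable_on {a..c}"
    proof -
      have "(\<lambda>x. (c - x) powr \<alpha> * f' x - (x - a) powr \<alpha> * f' x) absolutely_integrable_on {a..c}"
        by (rule set_integral_diff(1)[OF L(3) R(3)])
      then show ?thesis unfolding w_def by (simp add: algebra_simps)
    qed
    have Jeq: "J = integral {a..c} (\<lambda>x. (c - x) powr \<alpha> * f' x) - integral {a..c} (\<lambda>x. (x - a) powr \<alpha> * f' x)"
    proof -
      have "J = integral {a..c} (\<lambda>x. (c - x) powr \<alpha> * f' x - (x - a) powr \<alpha> * f' x)"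
        unfolding J_def w_def by (simp add: algebra_simps)
      also have "\<dots> = integral {a..c} (\<lambda>x. (c - x) powr \<alpha> * f' x) - integral {a..c} (\<lambda>x. (x - a) powr \<alpha> * f' x)"
        by (rule integral_diff) (use L(3) R(3) set_lebesgue_integral_eq_integral(1) in blast)+
      finally show ?thesis .
    qed
    have G: "Gamma (\<alpha> + 1) = \<alpha> * Gamma \<alpha>" by (rule Gamma_plus1) (use a0 nonpos_Ints_nonpos in force)
    have Gp: "Gamma \<alpha> > 0" using a0 by (rule Gamma_real_pos)
    have P: "e powr \<alpha> > 0" using e0 by simp
    have ce: "c - a = e" using c_def by simp
    have "Gamma (\<alpha> + 1) * (RL_left \<alpha> a f c + RL_right \<alpha> c f a) = \<alpha> * Il + \<alpha> * Ir"
      using Gp unfolding RLl RLr G by (simp add: field_simps)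
    also have "\<dots> = e powr \<alpha> * (f a + f c) + J"
      using L(2) R(2) Jeq unfolding Il_def Ir_def ce by (simp add: algebra_simps)
    finally have GR: "Gamma (\<alpha> + 1) * (RL_left \<alpha> a f c + RL_right \<alpha> c f a) = e powr \<alpha> * (f a + f c) + J" .
    have LHS: "\<bar>(f a + f c) / 2 - Gamma (\<alpha> + 1) / (2 * e powr \<alpha>) * (RL_left \<alpha> a f c + RL_right \<alpha> c f a)\<bar>
         = \<bar>J\<bar> / (2 * e powr \<alpha>)"
    proof -
      have "Gamma (\<alpha> + 1) / (2 * e powr \<alpha>) * (RL_left \<alpha> a f c + RL_right \<alpha> c f a)
          = (e powr \<alpha> * (f a + f c) + J) / (2 * e powr \<alpha>)"
        using GR by (simp add: field_simps)
      also have "\<dots> = (f a + f c) / 2 + J / (2 * e powr \<alpha>)"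
        using P by (simp add: field_simps)
      finally show ?thesis using P by (simp add: abs_minus_commute)
    qed
    have Aq0: "Aq \<ge> 0" and Bq0: "Bq \<ge> 0" unfolding Aq_def Bq_def by simp_all
    have absJ: "\<bar>J\<bar> \<le> e powr (\<alpha> + 1) * ((Aq + Bq) / 2) powr (1 / q) / (\<alpha> * p + 1) powr (1 / p)"
    proof (cases "Aq + Bq = 0")
      case True
      then have AB: "Aq = 0" "Bq = 0" using Aq0 Bq0 by auto
      have "f' x = 0" if "x \<in> {a..c}" for x
      proof -
        have "\<bar>f' x\<bar> powr q \<le> 0" using Lb[OF that] AB by simp
        then have "\<bar>f' x\<bar> powr q = 0" by (meson antisym powr_ge_zero)
        then show ?thesis by simp
      qed
      then have "J = integral {a..c} (\<lambda>x. 0)" unfolding J_def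
        by (intro integral_cong) auto
      then have "J = 0" by simp
      then show ?thesis using e0 by simp
    next
      case False
      define U where "U = e powr (\<alpha> * p + 1) / (\<alpha> * p + 1)"
      define V where "V = e * ((Aq + Bq) / 2)"
      have ap: "\<alpha> * p > 0" using a0 p1 by simp
      have Up: "U > 0" using e0 ap U_def by simp
      have "Aq + Bq > 0" using Aq0 Bq0 False by linarith
      then have Vp: "V > 0" unfolding V_def using e0 by (intro mult_pos_pos) auto
      have hI: "((\<lambda>x. \<bar>a + c - 2 * x\<bar> powr (\<alpha> * p)) has_integral U) {a..c}"
        using abs_powr_integral[OF ap ac] ce U_def by simp
      have LI: "((\<lambda>x. (1 - (x - a) / e) * Aq + (x - a) / e * Bq) has_integral V) {a..c}"
        using linear_integral[OF ac, of Aq Bq] unfolding ce V_def .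
      have uvint: "(\<lambda>x. \<bar>w x\<bar> * \<bar>f' x\<bar>) integrable_on {a..c}"
        using wf unfolding absolutely_integrable_on_def by (simp add: abs_mult)
      have hold: "integral {a..c} (\<lambda>x. \<bar>w x\<bar> * \<bar>f' x\<bar>) \<le> U powr (1 / p) * V powr (1 / q)"
      proof (rule holder_bound[OF p1 pq(1) pq(2) Up Vp])
        fix x assume x: "x \<in> {a..c}"
        have "\<bar>w x\<bar> \<le> \<bar>(c - x) - (x - a)\<bar> powr \<alpha>"
          unfolding w_def using x a0 al by (intro powr_diff_le) auto
        also have "\<bar>(c - x) - (x - a)\<bar> = \<bar>a + c - 2 * x\<bar>" by simp
        finally have "\<bar>w x\<bar> powr p \<le> (\<bar>a + c - 2 * x\<bar> powr \<alpha>) powr p"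
          using p1 by (intro powr_mono2) auto
        then show "\<bar>w x\<bar> powr p \<le> \<bar>a + c - 2 * x\<bar> powr (\<alpha> * p)"
          by (simp add: powr_powr)
        show "\<bar>f' x\<bar> powr q \<le> (1 - (x - a) / e) * Aq + (x - a) / e * Bq" using Lb[OF x] .
      next
        show "(\<lambda>x. \<bar>a + c - 2 * x\<bar> powr (\<alpha> * p)) integrable_on {a..c}" using hI by blast
        show "integral {a..c} (\<lambda>x. \<bar>a + c - 2 * x\<bar> powr (\<alpha> * p)) \<le> U"
          using integral_unique[OF hI] by simp
        show "(\<lambda>x. (1 - (x - a) / e) * Aq + (x - a) / e * Bq) integrable_on {a..c}" using LI by blast
        show "integral {a..c} (\<lambda>x. (1 - (x - a) / e) * Aq + (x - a) / e * Bq) \<le> V"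
          using integral_unique[OF LI] by simp
      qed (use uvint in auto)
      have "\<bar>J\<bar> \<le> integral {a..c} (\<lambda>x. \<bar>w x\<bar> * \<bar>f' x\<bar>)"
        unfolding J_def using integral_norm_bound_integral[OF set_lebesgue_integral_eq_integral(1)[OF wf] uvint]
        by (simp add: abs_mult)
      also note hold
      also have "U powr (1 / p) * V powr (1 / q)
          = e powr (\<alpha> + 1) * ((Aq + Bq) / 2) powr (1 / q) / (\<alpha> * p + 1) powr (1 / p)"
      proof -
        have "U powr (1 / p) = e powr ((\<alpha> * p + 1) * (1 / p)) / (\<alpha> * p + 1) powr (1 / p)"
          unfolding U_def using e0 ap by (simp add: powr_divide powr_powr)
        also have "(\<alpha> * p + 1) * (1 / p) = \<alpha> + 1 / p" using p1 by (simp add: field_simps)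
        finally have Ue: "U powr (1 / p) = e powr (\<alpha> + 1 / p) / (\<alpha> * p + 1) powr (1 / p)" .
        have Ve: "V powr (1 / q) = e powr (1 / q) * ((Aq + Bq) / 2) powr (1 / q)"
          unfolding V_def using e0 Aq0 Bq0 by (intro powr_mult)
        have ee: "e powr (\<alpha> + 1 / p) * e powr (1 / q) = e powr (\<alpha> + 1)"
          using pq(2) by (simp add: powr_add[symmetric] add.assoc)
        show ?thesis unfolding Ue Ve using ee by (simp add: field_simps)
      qed
      finally show ?thesis .
    qed
    have "\<bar>J\<bar> / (2 * e powr \<alpha>)
        \<le> e powr (\<alpha> + 1) * ((Aq + Bq) / 2) powr (1 / q) / (\<alpha> * p + 1) powr (1 / p) / (2 * e powr \<alpha>)"
      using absJ P by (intro divide_right_mono) auto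
    also have "\<dots> = e / (2 * (\<alpha> * p + 1) powr (1 / p)) * ((Aq + Bq) / 2) powr (1 / q)"
    proof -
      have "e powr (\<alpha> + 1) = e powr \<alpha> * e" using e0 by (simp add: powr_add)
      then show ?thesis using P by (simp add: field_simps)
    qed
    finally show ?thesis unfolding LHS .

  qed
  then show ?thesis unfolding c_def e_def Aq_def Bq_def .
qed

end
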